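(* Let $m\ge 1$, $k\ge 2$ and $n\ge k-1$. Then $\dim W_{m,k}=\dim U_{m,k}$.
   Context: $mB^n=\{0,1,\ldots,m\}^n$. A polynomial has a zero of multiplicity at least $k$ at $\mathbf a$ if all its partial derivatives of order less than $k$ vanish at $\mathbf a$. For an integer $k\ge 2$, a polynomial $P\in\mathbb{R}[x_1,\ldots,x_n]$ is called $(m,k)$-reduced if two conditions hold: $\deg P\le mn+(m+1)(k-1)-1$, and no monomial of $P$ is divisible by $x_{i_1}^{m+1}\cdots x_{i_k}^{m+1}$ for any indices $i_1,\ldots,i_k$ (not necessarily distinct). $U_{m,k}$ is the space of $(m,k)$-reduced polynomials with a zero of multiplicity at least $k$ at every point of $mB^n\setminus\{\mathbf 0\}$. $W_{m,k}$ is the real span of all polynomials $(x_1\cdots x_n)^m(x_1^{l_1}\cdots x_n^{l_n})^{m+1}(x_1^d+\cdots+x_n^d)$ with $d,l_1,\ldots,l_n$ nonnegative integers and $d+(m+1)(l_1+\cdots+l_n)=(m+1)(k-1)-1$. *)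

theory Defs
  imports Complex_Main "HOL-Library.Function_Algebras"
begin

text \<open>Polynomials in the variables x_0,...,x_{n-1} with real coefficients are represented
  by their coefficient functions: P :: (nat => nat) => real maps an exponent vector alpha
  (alpha i = exponent of x_i) to the coefficient of the monomial x^alpha.\<close>

type_synonym rpoly = "(nat \<Rightarrow> nat) \<Rightarrow> real"

definition pscale :: "real \<Rightarrow> rpoly \<Rightarrow> rpoly" where
  "pscale c P = (\<lambda>\<alpha>. c * P \<alpha>)"

definition expvecs :: "nat \<Rightarrow> (nat \<Rightarrow> nat) set" where
  "expvecs n = {\<alpha>. \<forall>i\<ge>n. \<alpha> i = 0}"

definition is_poly :: "nat \<Rightarrow> rpoly \<Rightarrow> bool" where
  "is_poly n P \<longleftrightarrow> finite {\<alpha>. P \<alpha> \<noteq> 0} \<and> {\<alpha>. P \<alpha> \<noteq> 0} \<subseteq> expvecs n"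

definition deg_le :: "nat \<Rightarrow> rpoly \<Rightarrow> nat \<Rightarrow> bool" where
  "deg_le n P D \<longleftrightarrow> (\<forall>\<alpha>. P \<alpha> \<noteq> 0 \<longrightarrow> (\<Sum>i<n. \<alpha> i) \<le> D)"

definition peval :: "nat \<Rightarrow> rpoly \<Rightarrow> (nat \<Rightarrow> real) \<Rightarrow> real" where
  "peval n P a = (\<Sum>\<alpha>\<in>{\<alpha>. P \<alpha> \<noteq> 0}. P \<alpha> * (\<Prod>i<n. a i ^ \<alpha> i))"

definition pderiv_multi :: "nat \<Rightarrow> (nat \<Rightarrow> nat) \<Rightarrow> rpoly \<Rightarrow> rpoly" where
  "pderiv_multi n \<beta> P = (\<lambda>\<alpha>.
     (\<Prod>i<n. real (fact (\<alpha> i + \<beta> i)) / real (fact (\<alpha> i))) * P (\<lambda>i. \<alpha> i + \<beta> i))"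

definition zero_mult_ge :: "nat \<Rightarrow> rpoly \<Rightarrow> nat \<Rightarrow> (nat \<Rightarrow> real) \<Rightarrow> bool" where
  "zero_mult_ge n P k a \<longleftrightarrow>
     (\<forall>\<beta>\<in>expvecs n. (\<Sum>i<n. \<beta> i) < k \<longrightarrow> peval n (pderiv_multi n \<beta> P) a = 0)"

definition grid :: "nat \<Rightarrow> nat \<Rightarrow> (nat \<Rightarrow> nat) set" where
  "grid n m = {a. (\<forall>i<n. a i \<le> m) \<and> (\<forall>i\<ge>n. a i = 0)}"

text \<open>The monomial x^alpha is divisible by
  x_{i_1}^{m+1}...x_{i_k}^{m+1} (indices in {0..n-1}, not necessarily distinct,
  given by the function iota on {0..k-1}) iff alpha_i >= (m+1) * #{j<k. iota j = i} for all i.\<close>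
definition reduced :: "nat \<Rightarrow> nat \<Rightarrow> nat \<Rightarrow> rpoly \<Rightarrow> bool" where
  "reduced n m k P \<longleftrightarrow>
     deg_le n P (m * n + (m + 1) * (k - 1) - 1) \<and>
     (\<forall>\<alpha>. P \<alpha> \<noteq> 0 \<longrightarrow>
        \<not> (\<exists>\<iota>::nat \<Rightarrow> nat. (\<forall>j<k. \<iota> j < n) \<and>
              (\<forall>i<n. (m + 1) * card {j. j < k \<and> \<iota> j = i} \<le> \<alpha> i)))"

definition U_space :: "nat \<Rightarrow> nat \<Rightarrow> nat \<Rightarrow> rpoly set" where
  "U_space n m k = {P. is_poly n P \<and> reduced n m k P \<and>
      (\<forall>a\<in>grid n m - {(\<lambda>_. 0)}. zero_mult_ge n P k (\<lambda>i. real (a i)))}"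

text \<open>The generator (x_1...x_n)^m (x^l)^(m+1) (x_1^d + ... + x_n^d).\<close>
definition W_gen :: "nat \<Rightarrow> nat \<Rightarrow> nat \<Rightarrow> (nat \<Rightarrow> nat) \<Rightarrow> rpoly" where
  "W_gen n m d l = (\<lambda>\<alpha>. \<Sum>j<n.
      (if \<alpha> = (\<lambda>i. if i < n then m + (m + 1) * l i + (if i = j then d else 0) else 0)
       then 1 else 0))"

definition W_space :: "nat \<Rightarrow> nat \<Rightarrow> nat \<Rightarrow> rpoly set" where
  "W_space n m k = module.span pscale
     {W_gen n m d l | d l. l \<in> expvecs n \<and>
        d + (m + 1) * (\<Sum>i<n. l i) = (m + 1) * (k - 1) - 1}"

end

theory Submission
  imports Defs "HOL-Computational_Algebra.Polynomial" "HOL-Library.FuncSet"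
begin


context vector_space begin

lemma finite_dim_basis:
  assumes "finite B0" "V \<subseteq> span B0"
  obtains B where "B \<subseteq> V" "independent B" "V \<subseteq> span B" "card B = dim V" "finite B"
proof -
  obtain B where B: "B \<subseteq> V" "independent B" "V \<subseteq> span B" "card B = dim V"
    using basis_exists by blast
  have "finite B" using independent_span_bound[OF assms(1) B(2)] B(1) assms(2) by blast
  then show ?thesis using B that by blast
qed

lemma dim_cut:
  fixes l :: "'c \<Rightarrow> 'b \<Rightarrow> 'a" and rho :: "'c \<Rightarrow> nat"
  assumes V: "subspace V"
    and fd: "finite B0" "V \<subseteq> span B0"
  shows "finite I \<Longrightarrow>
    (\<And>c x y. c\<in>I \<Longrightarrow> x\<in>V \<Longrightarrow> y\<in>V \<Longrightarrow> l c (x+y) = l c x + l c y) \<Longrightarrow>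
    (\<And>c r x. c\<in>I \<Longrightarrow> x\<in>V \<Longrightarrow> l c (scale r x) = r * l c x) \<Longrightarrow>
    (\<And>c. c\<in>I \<Longrightarrow> \<exists>w\<in>V. l c w \<noteq> 0 \<and> (\<forall>c'\<in>I. c' \<noteq> c \<and> rho c' \<le> rho c \<longrightarrow> l c' w = 0)) \<Longrightarrow>
    dim {x\<in>V. \<forall>c\<in>I. l c x = 0} + card I = dim V"
proof (induction "card I" arbitrary: I)
  case 0
  then show ?case by simp
next
  case (Suc k I)
  have "I \<noteq> {}" using Suc.hyps(2) by auto
  define mx where "mx = Max (rho ` I)"
  have "mx \<in> rho ` I" unfolding mx_def using Suc.prems(1) \<open>I \<noteq> {}\<close> by (intro Max_in) auto
  then obtain c0 where c0: "c0 \<in> I" "rho c0 = mx" by blast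
  have c0max: "\<forall>c\<in>I. rho c \<le> rho c0" using c0 Suc.prems(1) unfolding mx_def by auto
  define I' where "I' = I - {c0}"
  have cI': "k = card I'" using Suc.hyps(2) c0 Suc.prems(1) unfolding I'_def by auto
  have IH: "dim {x\<in>V. \<forall>c\<in>I'. l c x = 0} + card I' = dim V"
  proof (rule Suc.hyps(1)[OF cI'])
    show "finite I'" using Suc.prems(1) unfolding I'_def by auto
    show "\<And>c x y. c \<in> I' \<Longrightarrow> x \<in> V \<Longrightarrow> y \<in> V \<Longrightarrow> l c (x + y) = l c x + l c y"
      using Suc.prems(2) unfolding I'_def by blast
    show "\<And>c r x. c \<in> I' \<Longrightarrow> x \<in> V \<Longrightarrow> l c (r *s x) = r * l c x"
      using Suc.prems(3) unfolding I'_def by blast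
    fix c assume "c \<in> I'"
    then obtain w where "w\<in>V" "l c w \<noteq> 0" "\<forall>c'\<in>I. c' \<noteq> c \<and> rho c' \<le> rho c \<longrightarrow> l c' w = 0"
      using Suc.prems(4)[of c] unfolding I'_def by blast
    then show "\<exists>w\<in>V. l c w \<noteq> 0 \<and> (\<forall>c'\<in>I'. c' \<noteq> c \<and> rho c' \<le> rho c \<longrightarrow> l c' w = 0)"
      unfolding I'_def by blast
  qed
  define K' where "K' = {x\<in>V. \<forall>c\<in>I'. l c x = 0}"
  define K where "K = {x\<in>V. \<forall>c\<in>I. l c x = 0}"
  obtain w where w: "w \<in> V" "l c0 w \<noteq> 0" "\<forall>c'\<in>I. c' \<noteq> c0 \<and> rho c' \<le> rho c0 \<longrightarrow> l c' w = 0"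
    using Suc.prems(4)[OF c0(1)] by blast
  have wK': "w \<in> K'" using w c0max unfolding K'_def I'_def by auto
  have l0: "l c 0 = 0" if "c \<in> I" for c
    using Suc.prems(3)[OF that, of 0 0] V subspace_0 by force
  have subK: "subspace K"
    unfolding subspace_def
  proof (intro conjI ballI allI)
    show "0 \<in> K" unfolding K_def using V subspace_0 l0 by auto
    fix x y assume "x \<in> K" "y \<in> K"
    then show "x + y \<in> K" unfolding K_def using V subspace_add Suc.prems(2) by auto
  next
    fix r x assume "x \<in> K"
    then show "r *s x \<in> K" unfolding K_def using V subspace_scale Suc.prems(3) by auto
  qed
  have KK': "K \<subseteq> K'" unfolding K_def K'_def I'_def by auto
  have K'V: "K' \<subseteq> V" unfolding K'_def by auto
  obtain BK where BK: "BK \<subseteq> K" "independent BK" "K \<subseteq> span BK" "card BK = dim K" "finite BK"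
    using finite_dim_basis[OF fd(1), of K] fd(2) K'V KK' by blast
  have spBK: "span BK = K" using span_subspace[OF BK(1) BK(3) subK] .
  have wnot: "w \<notin> span BK" using spBK w(2) c0(1) unfolding K_def by auto
  have ind: "independent (insert w BK)" using independent_insertI[OF wnot BK(2)] .
  have "dim K' = card (insert w BK)"
  proof (rule dim_unique)
    show "insert w BK \<subseteq> K'" using wK' BK(1) KK' by auto
    show "K' \<subseteq> span (insert w BK)"
    proof
      fix x assume x: "x \<in> K'"
      define t where "t = l c0 x / l c0 w"
      have "x - scale t w \<in> K"
      proof -
        have xv: "x \<in> V" "scale (-t) w \<in> V" using x K'V w(1) V subspace_scale[OF V w(1), of "-t"] by auto
        have "l c (x - scale t w) = l c x - t * l c w" if "c \<in> I" for c
          using Suc.prems(2)[OF that xv] Suc.prems(3)[OF that w(1), of "-t"]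
          by (simp add: scale_minus_left)
        moreover have "x - scale t w \<in> V" using xv V subspace_add by fastforce
        moreover have "l c x - t * l c w = 0" if "c \<in> I" for c
        proof (cases "c = c0")
          case True then show ?thesis using w(2) unfolding t_def by simp
        next
          case False then show ?thesis using x wK' that unfolding K'_def I'_def by auto
        qed
        ultimately show ?thesis unfolding K_def by auto
      qed
      then have "x - scale t w \<in> span (insert w BK)" using spBK span_mono[of BK "insert w BK"] by auto
      moreover have "scale t w \<in> span (insert w BK)" by (simp add: span_base span_scale)
      ultimately have "(x - scale t w) + scale t w \<in> span (insert w BK)" using span_add by blast
      then show "x \<in> span (insert w BK)" by simp
    qed
  qed (use ind in auto)
  then have "dim K' = dim K + 1" proof -
    have "w \<notin> BK" using wnot span_base by blast
    then show ?thesis using BK(4,5) \<open>dim K' = card (insert w BK)\<close> by simp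
  qed
  then show ?case using IH cI' Suc.hyps(2) unfolding K_def K'_def by simp
qed

end


interpretation pv: vector_space pscale
  by unfold_locales (auto simp: pscale_def algebra_simps fun_eq_iff)

lemma sum_fun_apply: "(\<Sum>x\<in>A. f x) (a::'a) = (\<Sum>x\<in>A. f x a)"
  by (induction A rule: infinite_finite_induct) auto

lemma pscale_apply[simp]: "pscale c P a = c * P a"
  by (simp add: pscale_def)

definition supp :: "rpoly \<Rightarrow> (nat \<Rightarrow> nat) set" where
  "supp P = {\<alpha>. P \<alpha> \<noteq> 0}"

definition mono :: "nat \<Rightarrow> (nat \<Rightarrow> nat) \<Rightarrow> (nat \<Rightarrow> real) \<Rightarrow> real" where
  "mono n \<alpha> a = (\<Prod>i<n. a i ^ \<alpha> i)"

lemma peval_superset: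
  assumes "finite F" "supp P \<subseteq> F"
  shows "peval n P a = (\<Sum>\<alpha>\<in>F. P \<alpha> * mono n \<alpha> a)"
  unfolding peval_def mono_def
  by (rule sum.mono_neutral_left) (use assms in \<open>auto simp: supp_def\<close>)

lemma finite_supp_pderiv:
  assumes "finite (supp P)"
  shows "finite (supp (pderiv_multi n \<beta> P))"
proof -
  have "supp (pderiv_multi n \<beta> P) \<subseteq> (\<lambda>\<gamma>. \<lambda>i. \<gamma> i - \<beta> i) ` supp P"
  proof
    fix \<alpha> assume "\<alpha> \<in> supp (pderiv_multi n \<beta> P)"
    then have "(\<lambda>i. \<alpha> i + \<beta> i) \<in> supp P" by (auto simp: supp_def pderiv_multi_def)
    then show "\<alpha> \<in> (\<lambda>\<gamma>. \<lambda>i. \<gamma> i - \<beta> i) ` supp P"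
      by (rule image_eqI[rotated]) simp
  qed
  then show ?thesis using assms finite_surj by blast
qed

lemma pderiv_multi_add: "pderiv_multi n \<beta> (P + Q) = pderiv_multi n \<beta> P + pderiv_multi n \<beta> Q"
  by (simp add: pderiv_multi_def fun_eq_iff algebra_simps)

lemma pderiv_multi_scale: "pderiv_multi n \<beta> (pscale c P) = pscale c (pderiv_multi n \<beta> P)"
  by (simp add: pderiv_multi_def fun_eq_iff algebra_simps)

lemma supp_add: "supp (P + Q) \<subseteq> supp P \<union> supp Q"
  by (auto simp: supp_def)

lemma supp_scale: "supp (pscale c P) \<subseteq> supp P"
  by (auto simp: supp_def)

lemma peval_add:
  assumes "finite (supp P)" "finite (supp Q)"
  shows "peval n (P + Q) a = peval n P a + peval n Q a"
proof -
  let ?F = "supp P \<union> supp Q"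
  have "peval n (P + Q) a = (\<Sum>\<alpha>\<in>?F. (P + Q) \<alpha> * mono n \<alpha> a)"
    by (rule peval_superset) (use assms supp_add in auto)
  also have "\<dots> = (\<Sum>\<alpha>\<in>?F. P \<alpha> * mono n \<alpha> a) + (\<Sum>\<alpha>\<in>?F. Q \<alpha> * mono n \<alpha> a)"
    by (simp add: algebra_simps sum.distrib)
  also have "\<dots> = peval n P a + peval n Q a"
    by (subst (1 2) peval_superset[where F="?F"]) (use assms in auto)
  finally show ?thesis .
qed

lemma peval_scale:
  assumes "finite (supp P)"
  shows "peval n (pscale c P) a = c * peval n P a"
proof -
  have "peval n (pscale c P) a = (\<Sum>\<alpha>\<in>supp P. c * P \<alpha> * mono n \<alpha> a)"
    by (subst peval_superset[where F="supp P"]) (use assms supp_scale in auto)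
  also have "\<dots> = c * peval n P a"
    by (subst peval_superset[where F="supp P"]) (use assms in \<open>auto simp: sum_distrib_left algebra_simps\<close>)
  finally show ?thesis .
qed

definition ell :: "nat \<Rightarrow> (nat \<Rightarrow> nat) \<times> (nat \<Rightarrow> nat) \<Rightarrow> rpoly \<Rightarrow> real" where
  "ell n c P = peval n (pderiv_multi n (snd c) P) (\<lambda>i. real (fst c i))"

lemma ell_add:
  assumes "finite (supp P)" "finite (supp Q)"
  shows "ell n c (P + Q) = ell n c P + ell n c Q"
  unfolding ell_def pderiv_multi_add
  by (rule peval_add) (use assms finite_supp_pderiv in auto)

lemma ell_scale:
  assumes "finite (supp P)"
  shows "ell n c (pscale r P) = r * ell n c P"
  unfolding ell_def pderiv_multi_scale
  by (rule peval_scale) (use assms finite_supp_pderiv in auto)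

lemma ell_diff:
  assumes "finite (supp P)" "finite (supp Q)"
  shows "ell n c (P - Q) = ell n c P - ell n c Q"
proof -
  have "P - Q = P + pscale (-1) Q" by (simp add: fun_eq_iff pscale_def)
  moreover have "finite (supp (pscale (-1) Q))" using assms(2) supp_scale finite_subset by blast
  moreover have "ell n c (P + pscale (-1) Q) = ell n c P + ell n c (pscale (-1) Q)"
    using ell_add[OF assms(1) \<open>finite (supp (pscale (-1) Q))\<close>] .
  ultimately show ?thesis using ell_scale[OF assms(2), of n c "-1"] by simp
qed



definition box :: "nat \<Rightarrow> (nat \<Rightarrow> nat) \<Rightarrow> (nat \<Rightarrow> nat) set" where
  "box n d = {\<alpha>. (\<forall>i<n. \<alpha> i \<le> d i) \<and> (\<forall>i\<ge>n. \<alpha> i = 0)}"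

lemma box_bij: "bij_betw (\<lambda>\<alpha>. restrict \<alpha> {..<n}) (box n d) (PiE {..<n} (\<lambda>i. {..d i}))"
proof (rule bij_betw_byWitness[where f'="\<lambda>g i. if i < n then g i else 0"])
  show "\<forall>a\<in>box n d. (\<lambda>i. if i < n then restrict a {..<n} i else 0) = a"
    by (auto simp: box_def fun_eq_iff)
  show "\<forall>a'\<in>PiE {..<n} (\<lambda>i. {..d i}). restrict (\<lambda>i. if i < n then a' i else 0) {..<n} = a'"
    by (auto simp: PiE_def extensional_def fun_eq_iff)
  show "(\<lambda>\<alpha>. restrict \<alpha> {..<n}) ` box n d \<subseteq> PiE {..<n} (\<lambda>i. {..d i})"
  proof
    fix g assume "g \<in> (\<lambda>\<alpha>. restrict \<alpha> {..<n}) ` box n d"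
    then obtain \<alpha> where "\<alpha> \<in> box n d" "g = restrict \<alpha> {..<n}" by blast
    then show "g \<in> PiE {..<n} (\<lambda>i. {..d i})"
      by (simp only: restrict_PiE_iff) (auto simp: box_def)
  qed
  show "(\<lambda>g i. if i < n then g i else 0) ` PiE {..<n} (\<lambda>i. {..d i}) \<subseteq> box n d"
    by (auto simp: box_def PiE_def Pi_def)
qed

lemma finite_box: "finite (box n d)"
  using bij_betw_finite[OF box_bij[of n d]] by (simp add: finite_PiE)

definition prodp :: "nat \<Rightarrow> (nat \<Rightarrow> real poly) \<Rightarrow> rpoly" where
  "prodp n ps = (\<lambda>\<alpha>. if \<alpha> \<in> expvecs n then (\<Prod>i<n. coeff (ps i) (\<alpha> i)) else 0)"

lemma supp_prodp: "supp (prodp n ps) \<subseteq> box n (\<lambda>i. degree (ps i))"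
proof
  fix \<alpha> assume a: "\<alpha> \<in> supp (prodp n ps)"
  then have e: "\<alpha> \<in> expvecs n" and p: "(\<Prod>i<n. coeff (ps i) (\<alpha> i)) \<noteq> 0"
    by (auto simp: supp_def prodp_def split: if_splits)
  have "\<alpha> i \<le> degree (ps i)" if "i < n" for i
  proof (rule ccontr)
    assume "\<not> ?thesis"
    then have "coeff (ps i) (\<alpha> i) = 0" by (simp add: coeff_eq_0)
    then show False using p that by auto
  qed
  then show "\<alpha> \<in> box n (\<lambda>i. degree (ps i))" using e by (auto simp: box_def expvecs_def)
qed

lemma finite_supp_prodp: "finite (supp (prodp n ps))"
  using finite_subset[OF supp_prodp finite_box] .

lemma is_poly_prodp: "is_poly n (prodp n ps)"
  unfolding is_poly_def using finite_supp_prodp[of n ps]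
  by (auto simp: supp_def prodp_def split: if_splits)

lemma peval_prodp: "peval n (prodp n qs) a = (\<Prod>i<n. poly (qs i) (a i))"
proof -
  let ?d = "\<lambda>i. degree (qs i)"
  have "peval n (prodp n qs) a = (\<Sum>\<alpha>\<in>box n ?d. prodp n qs \<alpha> * mono n \<alpha> a)"
    by (rule peval_superset[OF finite_box supp_prodp])
  also have "\<dots> = (\<Sum>\<alpha>\<in>box n ?d. \<Prod>i<n. coeff (qs i) (restrict \<alpha> {..<n} i) * a i ^ (restrict \<alpha> {..<n} i))"
    by (rule sum.cong) (auto simp: prodp_def mono_def box_def expvecs_def prod.distrib)
  also have "\<dots> = (\<Sum>g\<in>PiE {..<n} (\<lambda>i. {..?d i}). \<Prod>i<n. coeff (qs i) (g i) * a i ^ (g i))"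
    by (rule sum.reindex_bij_betw[OF box_bij])
  also have "\<dots> = (\<Prod>i<n. \<Sum>t\<le>?d i. coeff (qs i) t * a i ^ t)"
    by (rule prod_sum_PiE[symmetric]) auto
  also have "\<dots> = (\<Prod>i<n. poly (qs i) (a i))"
    by (simp add: poly_altdef)
  finally show ?thesis .
qed

lemma coeff_pderiv_funpow:
  "coeff ((pderiv ^^ j) p) t = (fact (t + j) / fact t) * coeff (p :: real poly) (t + j)"
proof (induction j arbitrary: t)
  case 0
  then show ?case by simp
next
  case (Suc j)
  have "coeff ((pderiv ^^ Suc j) p) t = real (Suc t) * coeff ((pderiv ^^ j) p) (Suc t)"
    by (simp add: coeff_pderiv)
  also have "\<dots> = real (Suc t) * (fact (Suc t + j) / fact (Suc t)) * coeff p (Suc t + j)"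
    using Suc by simp
  also have "\<dots> = (fact (t + Suc j) / fact t) * coeff p (t + Suc j)"
  proof -
    have "fact (Suc t) = real (Suc t) * (fact t :: real)" by (simp del: of_nat_Suc)
    moreover have "Suc t + j = t + Suc j" by simp
    ultimately show ?thesis by (simp del: of_nat_Suc)
  qed
  finally show ?case .
qed

lemma pderiv_prodp:
  assumes "\<beta> \<in> expvecs n"
  shows "pderiv_multi n \<beta> (prodp n ps) = prodp n (\<lambda>i. (pderiv ^^ \<beta> i) (ps i))"
proof
  fix \<alpha>
  have iff: "(\<lambda>i. \<alpha> i + \<beta> i) \<in> expvecs n \<longleftrightarrow> \<alpha> \<in> expvecs n"
    using assms by (auto simp: expvecs_def)
  show "pderiv_multi n \<beta> (prodp n ps) \<alpha> = prodp n (\<lambda>i. (pderiv ^^ \<beta> i) (ps i)) \<alpha>"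
    unfolding pderiv_multi_def prodp_def iff
    by (simp only: coeff_pderiv_funpow prod.distrib) simp
qed

lemma ell_prodp:
  assumes "b \<in> expvecs n"
  shows "ell n (a, b) (prodp n ps) = (\<Prod>i<n. poly ((pderiv ^^ b i) (ps i)) (real (a i)))"
  unfolding ell_def using assms by (simp add: pderiv_prodp peval_prodp)

lemma factor_deriv:
  fixes u :: "real poly"
  shows "(j < e \<longrightarrow> poly ((pderiv ^^ j) ([:-c, 1:] ^ e * u)) c = 0) \<and>
         poly ((pderiv ^^ e) ([:-c, 1:] ^ e * u)) c = fact e * poly u c"
proof (induction e arbitrary: u j)
  case 0
  then show ?case by simp
next
  case (Suc e)
  define u' where "u' = smult (of_nat (Suc e)) u + [:-c, 1:] * pderiv u"
  have pd: "pderiv ([:-c, 1:] ^ Suc e * u) = [:-c, 1:] ^ e * u'"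
  proof -
    define X where "X = [:-c, 1:]"
    have d1: "pderiv X = 1" unfolding X_def by (simp add: pderiv_pCons)
    have "pderiv (X ^ Suc e * u) = smult (of_nat (Suc e)) (X ^ e) * pderiv X * u + X ^ Suc e * pderiv u"
      unfolding pderiv_mult pderiv_power_Suc by (simp add: algebra_simps)
    also have "\<dots> = X ^ e * (smult (of_nat (Suc e)) u + X * pderiv u)"
      by (simp only: d1) (simp add: algebra_simps)
    finally show ?thesis unfolding u'_def X_def .
  qed
  have fs: "(pderiv ^^ Suc i) q = (pderiv ^^ i) (pderiv q)" for i and q :: "real poly"
    by (simp add: funpow_Suc_right del: funpow.simps)
  show ?case
  proof (intro conjI impI)
    assume j: "j < Suc e"
    show "poly ((pderiv ^^ j) ([:-c, 1:] ^ Suc e * u)) c = 0"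
    proof (cases j)
      case 0 then show ?thesis by simp
    next
      case (Suc j') then show ?thesis using j Suc.IH[of j' u'] by (simp only: fs pd)
    qed
  next
    have "poly ((pderiv ^^ Suc e) ([:-c, 1:] ^ Suc e * u)) c = fact e * poly u' c"
      using Suc.IH[of e u'] by (simp only: fs pd)
    also have "\<dots> = fact (Suc e) * poly u c" by (simp add: u'_def)
    finally show "poly ((pderiv ^^ Suc e) ([:-c, 1:] ^ Suc e * u)) c = fact (Suc e) * poly u c" .
  qed
qed

definition lp :: "nat \<Rightarrow> (nat \<Rightarrow> nat) \<Rightarrow> real poly" where
  "lp m e = (\<Prod>s\<le>m. [:-real s, 1:] ^ e s)"

lemma lp_split:
  assumes "t \<le> m"
  shows "lp m e = [:-real t, 1:] ^ e t * (\<Prod>s\<in>{..m}-{t}. [:-real s, 1:] ^ e s)"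
  unfolding lp_def using assms by (subst prod.remove[of _ t]) auto

lemma lp_deriv_zero:
  assumes "t \<le> m" "j < e t"
  shows "poly ((pderiv ^^ j) (lp m e)) (real t) = 0"
  using factor_deriv[of j "e t" "real t"] assms by (simp add: lp_split[OF assms(1)])

lemma lp_deriv_nonzero:
  assumes "t \<le> m"
  shows "poly ((pderiv ^^ e t) (lp m e)) (real t) \<noteq> 0"
proof -
  have "poly ((pderiv ^^ e t) (lp m e)) (real t) = fact (e t) * poly (\<Prod>s\<in>{..m}-{t}. [:-real s, 1:] ^ e s) (real t)"
    using factor_deriv[of _ "e t" "real t"] by (simp add: lp_split[OF assms(1)])
  also have "\<dots> \<noteq> 0" by (auto simp: poly_prod)
  finally show ?thesis .
qed

lemma lp_degree: "degree (lp m e) = (\<Sum>s\<le>m. e s)"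
  unfolding lp_def by (subst degree_prod_eq_sum_degree) (auto simp: degree_linear_power)

lemma lp_lead: "lead_coeff (lp m e) = 1"
  unfolding lp_def by (simp add: lead_coeff_prod lead_coeff_power)



definition Dg :: "nat \<Rightarrow> nat \<Rightarrow> nat \<Rightarrow> nat" where
  "Dg n m k = m * n + (m + 1) * (k - 1) - 1"

definition hasI :: "nat \<Rightarrow> nat \<Rightarrow> nat \<Rightarrow> (nat \<Rightarrow> nat) \<Rightarrow> bool" where
  "hasI n m k \<alpha> \<longleftrightarrow> (\<exists>\<iota>::nat \<Rightarrow> nat. (\<forall>j<k. \<iota> j < n) \<and>
              (\<forall>i<n. (m + 1) * card {j. j < k \<and> \<iota> j = i} \<le> \<alpha> i))"

definition RM :: "nat \<Rightarrow> nat \<Rightarrow> nat \<Rightarrow> (nat \<Rightarrow> nat) set" where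
  "RM n m k = {\<alpha>\<in>expvecs n. (\<Sum>i<n. \<alpha> i) \<le> Dg n m k \<and> \<not> hasI n m k \<alpha>}"

lemma reduced_iff:
  assumes "is_poly n P"
  shows "reduced n m k P \<longleftrightarrow> supp P \<subseteq> RM n m k"
  using assms unfolding reduced_def RM_def deg_le_def is_poly_def supp_def hasI_def Dg_def
  by blast

lemma fiber_sum:
  fixes \<iota> :: "nat \<Rightarrow> nat" and n k :: nat
  assumes "\<forall>j<k. \<iota> j < n"
  shows "(\<Sum>i<n. card {j. j < k \<and> \<iota> j = i}) = k"
  using assms
proof (induction k)
  case 0
  then show ?case by simp
next
  case (Suc k)
  have eq: "{j. j < Suc k \<and> \<iota> j = i} =
        (if \<iota> k = i then insert k {j. j < k \<and> \<iota> j = i} else {j. j < k \<and> \<iota> j = i})" for i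
    by (auto simp: less_Suc_eq)
  have c: "card {j. j < Suc k \<and> \<iota> j = i} = card {j. j < k \<and> \<iota> j = i} + (if \<iota> k = i then 1 else 0)" for i
    unfolding eq by auto
  have "(\<Sum>i<n. card {j. j < Suc k \<and> \<iota> j = i}) =
        (\<Sum>i<n. card {j. j < k \<and> \<iota> j = i}) + (\<Sum>i<n. (if \<iota> k = i then 1 else 0))"
    unfolding c by (simp add: sum.distrib)
  also have "(\<Sum>i<n. (if \<iota> k = i then 1 else 0)) = (1::nat)"
  proof -
    have "\<iota> k < n" using Suc.prems by simp
    have "(\<Sum>i<n. (if \<iota> k = i then 1 else 0)) = (\<Sum>i\<in>{..<n}. (if i = \<iota> k then 1::nat else 0))"
      by (rule sum.cong) auto
    also have "\<dots> = 1" using \<open>\<iota> k < n\<close> by simp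
    finally show ?thesis .
  qed
  finally show ?case using Suc by simp
qed

lemma exists_iota:
  fixes q :: "nat \<Rightarrow> nat" and n k :: nat
  shows "k \<le> (\<Sum>i<n. q i) \<Longrightarrow> \<exists>\<iota>. (\<forall>j<k. \<iota> j < n) \<and> (\<forall>i<n. card {j. j < k \<and> \<iota> j = i} \<le> q i)"
proof (induction k arbitrary: q)
  case 0
  then show ?case by auto
next
  case (Suc k)
  obtain i0 where i0: "i0 < n" "q i0 \<ge> 1"
  proof (rule ccontr)
    assume "\<not> thesis"
    then have "\<forall>i<n. q i = 0" using that by force
    then show False using Suc.prems by simp
  qed
  define q' where "q' = q(i0 := q i0 - 1)"
  have "(\<Sum>i<n. q i) = q i0 + (\<Sum>i\<in>{..<n}-{i0}. q i)" using sum.remove[of "{..<n}" i0] i0 by simp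
  moreover have "(\<Sum>i<n. q' i) = q' i0 + (\<Sum>i\<in>{..<n}-{i0}. q' i)" using sum.remove[of "{..<n}" i0] i0 by simp
  moreover have "(\<Sum>i\<in>{..<n}-{i0}. q' i) = (\<Sum>i\<in>{..<n}-{i0}. q i)"
    by (rule sum.cong) (auto simp: q'_def)
  ultimately have "k \<le> (\<Sum>i<n. q' i)" using Suc.prems i0 by (simp add: q'_def)
  then obtain \<iota> where \<iota>: "\<forall>j<k. \<iota> j < n" "\<forall>i<n. card {j. j < k \<and> \<iota> j = i} \<le> q' i"
    using Suc.IH by blast
  define \<iota>' where "\<iota>' = \<iota>(k := i0)"
  have eq: "{j. j < Suc k \<and> \<iota>' j = i} =
        (if i0 = i then insert k {j. j < k \<and> \<iota> j = i} else {j. j < k \<and> \<iota> j = i})" for i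
    by (auto simp: less_Suc_eq \<iota>'_def)
  have "\<forall>j<Suc k. \<iota>' j < n" using \<iota>(1) i0(1) by (auto simp: \<iota>'_def less_Suc_eq)
  moreover have "\<forall>i<n. card {j. j < Suc k \<and> \<iota>' j = i} \<le> q i"
  proof (intro allI impI)
    fix i assume "i < n"
    then show "card {j. j < Suc k \<and> \<iota>' j = i} \<le> q i"
      using \<iota>(2) i0 unfolding eq by (cases "i0 = i") (auto simp: q'_def card_insert_if)
  qed
  ultimately show ?case by blast
qed

lemma le_mult_bound:
  fixes c b m :: nat
  assumes "(m + 1) * c \<le> (m + 1) * b + m"
  shows "c \<le> b"
proof (rule ccontr)
  assume "\<not> c \<le> b"
  then have "(m + 1) * (b + 1) \<le> (m + 1) * c" by (intro mult_le_mono2) simp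
  then show False using assms by (simp add: algebra_simps)
qed

lemma not_hasI:
  fixes \<alpha> \<beta> :: "nat \<Rightarrow> nat"
  assumes "\<forall>i<n. \<alpha> i \<le> (m + 1) * \<beta> i + m" "(\<Sum>i<n. \<beta> i) < k"
  shows "\<not> hasI n m k \<alpha>"
proof
  assume "hasI n m k \<alpha>"
  then obtain \<iota> where \<iota>: "\<forall>j<k. \<iota> j < n" "\<forall>i<n. (m + 1) * card {j. j < k \<and> \<iota> j = i} \<le> \<alpha> i"
    unfolding hasI_def by blast
  have "\<forall>i<n. card {j. j < k \<and> \<iota> j = i} \<le> \<beta> i"
    using \<iota>(2) assms(1) le_mult_bound by (meson order_trans)
  then have "(\<Sum>i<n. card {j. j < k \<and> \<iota> j = i}) \<le> (\<Sum>i<n. \<beta> i)" by (intro sum_mono) auto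
  then show False using fiber_sum[OF \<iota>(1)] assms(2) by simp
qed

lemma hasI_div:
  fixes \<alpha> :: "nat \<Rightarrow> nat"
  assumes "k \<le> (\<Sum>i<n. \<alpha> i div (m + 1))"
  shows "hasI n m k \<alpha>"
proof -
  obtain \<iota> where \<iota>: "\<forall>j<k. \<iota> j < n" "\<forall>i<n. card {j. j < k \<and> \<iota> j = i} \<le> \<alpha> i div (m + 1)"
    using exists_iota[OF assms] by blast
  have "(m + 1) * card {j. j < k \<and> \<iota> j = i} \<le> \<alpha> i" if "i < n" for i
  proof -
    have "(m + 1) * card {j. j < k \<and> \<iota> j = i} \<le> (m + 1) * (\<alpha> i div (m + 1))"
      using \<iota>(2) that by (intro mult_le_mono2) simp
    also have "\<dots> \<le> \<alpha> i" by (metis div_mult_mod_eq le_add1 mult.commute)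
    finally show ?thesis .
  qed
  then show ?thesis unfolding hasI_def using \<iota>(1) by blast
qed



definition mv :: "nat \<Rightarrow> nat \<Rightarrow> nat \<Rightarrow> nat" where
  "mv n m = (\<lambda>i. if i < n then m else 0)"

definition Qk :: "nat \<Rightarrow> nat \<Rightarrow> (nat \<Rightarrow> nat) set" where
  "Qk n k = {q\<in>expvecs n. (\<Sum>i<n. q i) < k}"

definition Qt :: "nat \<Rightarrow> nat \<Rightarrow> (nat \<Rightarrow> nat) set" where
  "Qt n k = {q\<in>expvecs n. (\<Sum>i<n. q i) = k - 1}"

definition Qp :: "nat \<Rightarrow> nat \<Rightarrow> (nat \<Rightarrow> nat) set" where
  "Qp n k = {q\<in>expvecs n. (\<Sum>i<n. q i) \<le> k - 2}"

definition Top :: "nat \<Rightarrow> nat \<Rightarrow> nat \<Rightarrow> ((nat \<Rightarrow> nat) \<times> (nat \<Rightarrow> nat)) set" where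
  "Top n m k = (\<lambda>q. (mv n m, q)) ` Qt n k"

definition Phi :: "nat \<Rightarrow> (nat \<Rightarrow> nat) \<times> (nat \<Rightarrow> nat) \<Rightarrow> nat \<Rightarrow> nat" where
  "Phi m = (\<lambda>(r, q). \<lambda>i. (m + 1) * q i + r i)"

definition Cond :: "nat \<Rightarrow> nat \<Rightarrow> nat \<Rightarrow> ((nat \<Rightarrow> nat) \<times> (nat \<Rightarrow> nat)) set" where
  "Cond n m k = (grid n m - {(\<lambda>_. 0)}) \<times> Qk n k"

lemma grid_box: "grid n m = box n (\<lambda>_. m)"
  by (simp add: grid_def box_def)

lemma finite_grid: "finite (grid n m)"
  by (simp add: grid_box finite_box)

lemma finite_Qk: "finite (Qk n k)"
proof -
  have "Qk n k \<subseteq> box n (\<lambda>_. k)"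
  proof
    fix q assume q: "q \<in> Qk n k"
    have "q i \<le> k" if "i < n" for i
    proof -
      have "q i \<le> (\<Sum>i<n. q i)" using that by (intro member_le_sum) auto
      then show ?thesis using q by (simp add: Qk_def)
    qed
    then show "q \<in> box n (\<lambda>_. k)" using q by (auto simp: box_def Qk_def expvecs_def)
  qed
  then show ?thesis using finite_subset finite_box by blast
qed

lemma Dg_eq: "k \<ge> 2 \<Longrightarrow> Dg n m k = m * n + (m + 1) * (k - 2) + m"
proof -
  assume "k \<ge> 2"
  then have "k - 1 = Suc (k - 2)" by simp
  then show ?thesis unfolding Dg_def by (simp add: algebra_simps)
qed

lemma mv_grid: "mv n m \<in> grid n m"
  by (simp add: mv_def grid_def)

lemma sum_r_le: "r \<in> grid n m \<Longrightarrow> (\<Sum>i<n. r i) \<le> m * n"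
proof -
  assume "r \<in> grid n m"
  then have "(\<Sum>i<n. r i) \<le> (\<Sum>i<n. m)" by (intro sum_mono) (auto simp: grid_def)
  then show ?thesis by (simp add: mult.commute)
qed

lemma sum_r_less: "r \<in> grid n m \<Longrightarrow> r \<noteq> mv n m \<Longrightarrow> (\<Sum>i<n. r i) < m * n"
proof -
  assume r: "r \<in> grid n m" "r \<noteq> mv n m"
  have "\<exists>i<n. r i < m"
  proof (rule ccontr)
    assume "\<not> ?thesis"
    have "r i = mv n m i" for i
    proof (cases "i < n")
      case True
      then have "r i \<le> m" "\<not> r i < m" using r(1) \<open>\<not> (\<exists>i<n. r i < m)\<close> by (auto simp: grid_def)
      then show ?thesis using True by (simp add: mv_def)
    next
      case False
      then show ?thesis using r(1) by (simp add: mv_def grid_def)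
    qed
    then have "r = mv n m" by auto
    then show False using r(2) by simp
  qed
  then have "(\<Sum>i<n. r i) < (\<Sum>i<n. m)"
    using r(1) by (intro sum_strict_mono_ex1) (auto simp: grid_def)
  then show ?thesis by (simp add: mult.commute)
qed

lemma deg_bound:
  fixes \<alpha> r q :: "nat \<Rightarrow> nat"
  assumes k: "k \<ge> 2" and r: "r \<in> grid n m" and q: "(\<Sum>i<n. q i) < k"
    and nt: "\<not> (r = mv n m \<and> (\<Sum>i<n. q i) = k - 1)"
    and a: "\<forall>i<n. \<alpha> i \<le> (m + 1) * q i + r i"
  shows "(\<Sum>i<n. \<alpha> i) \<le> Dg n m k"
proof -
  have "(\<Sum>i<n. \<alpha> i) \<le> (\<Sum>i<n. (m + 1) * q i + r i)" using a by (intro sum_mono) auto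
  also have "\<dots> = (m + 1) * (\<Sum>i<n. q i) + (\<Sum>i<n. r i)" by (simp add: sum.distrib sum_distrib_left)
  finally have s: "(\<Sum>i<n. \<alpha> i) \<le> (m + 1) * (\<Sum>i<n. q i) + (\<Sum>i<n. r i)" .
  show ?thesis
  proof (cases "(\<Sum>i<n. q i) \<le> k - 2")
    case True
    then have "(m + 1) * (\<Sum>i<n. q i) \<le> (m + 1) * (k - 2)" by (intro mult_le_mono2)
    then show ?thesis using s sum_r_le[OF r] Dg_eq[OF k, where n=n and m=m] by linarith
  next
    case False
    then have e: "(\<Sum>i<n. q i) = Suc (k - 2)" using q k by linarith
    then have "r \<noteq> mv n m" using nt k by auto
    then have "(\<Sum>i<n. r i) < m * n" using sum_r_less[OF r] by blast
    moreover have "(m + 1) * (\<Sum>i<n. q i) = (m + 1) * (k - 2) + m + 1" using e by simp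
    ultimately show ?thesis using s Dg_eq[OF k, where n=n and m=m] by linarith
  qed
qed

lemma deg_bound_top:
  fixes \<alpha> q :: "nat \<Rightarrow> nat"
  assumes k: "k \<ge> 2" and q: "q \<in> expvecs n" "(\<Sum>i<n. q i) = k - 1"
    and ae: "\<alpha> \<in> expvecs n"
    and a: "\<forall>i<n. \<alpha> i \<le> (m + 1) * q i + m"
    and ne: "\<alpha> \<noteq> Phi m (mv n m, q)"
  shows "(\<Sum>i<n. \<alpha> i) \<le> Dg n m k"
proof -
  have "\<exists>i<n. \<alpha> i < (m + 1) * q i + m"
  proof (rule ccontr)
    assume "\<not> ?thesis"
    have "\<alpha> i = Phi m (mv n m, q) i" for i
    proof (cases "i < n")
      case True
      then have "\<alpha> i \<le> (m + 1) * q i + m" "\<not> \<alpha> i < (m + 1) * q i + m"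
        using a \<open>\<not> (\<exists>i<n. \<alpha> i < (m + 1) * q i + m)\<close> by auto
      then show ?thesis using True by (simp add: Phi_def mv_def)
    next
      case False
      then show ?thesis using ae q(1) by (simp add: Phi_def mv_def expvecs_def)
    qed
    then have "\<alpha> = Phi m (mv n m, q)" by auto
    then show False using ne by simp
  qed
  then have "(\<Sum>i<n. \<alpha> i) < (\<Sum>i<n. (m + 1) * q i + m)"
    using a by (intro sum_strict_mono_ex1) auto
  also have "\<dots> = (m + 1) * (\<Sum>i<n. q i) + m * n" by (simp add: sum.distrib sum_distrib_left)
  also have "(m + 1) * (\<Sum>i<n. q i) = (m + 1) * (k - 2) + m + 1"
  proof -
    have "(\<Sum>i<n. q i) = Suc (k - 2)" using q(2) k by linarith
    then show ?thesis by simp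
  qed
  finally show ?thesis using Dg_eq[OF k, where n=n and m=m] by linarith
qed

lemma Phi_apply: "Phi m (r, q) i = (m + 1) * q i + r i"
  by (simp add: Phi_def)

lemma dm: "(r::nat) < b \<Longrightarrow> (b*q + r) mod b = r \<and> (b*q + r) div b = q"
  by simp

lemma inj_Phi: "inj_on (Phi m) (grid n m \<times> Qk n k)"
proof (rule inj_onI)
  fix x y assume x: "x \<in> grid n m \<times> Qk n k" and y: "y \<in> grid n m \<times> Qk n k" and e: "Phi m x = Phi m y"
  obtain r q where xr: "x = (r, q)" by (cases x)
  obtain r' q' where yr: "y = (r', q')" by (cases y)
  have rb0: "r i < m + 1 \<and> r' i < m + 1" for i
    using x y unfolding xr yr grid_def by (cases "i < n") auto
  have rb: "r i < m + 1" "r' i < m + 1" for i using rb0[of i] by auto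
  have "r i = r' i \<and> q i = q' i" for i
  proof -
    have ee: "(m + 1) * q i + r i = (m + 1) * q' i + r' i"
      using fun_cong[OF e, of i] unfolding xr yr by (simp only: Phi_apply)
    have "((m + 1) * q i + r i) mod (m + 1) = r i \<and> ((m + 1) * q i + r i) div (m + 1) = q i"
      using dm[OF rb(1)[of i]] .
    moreover have "((m + 1) * q' i + r' i) mod (m + 1) = r' i \<and> ((m + 1) * q' i + r' i) div (m + 1) = q' i"
      using dm[OF rb(2)[of i]] .
    ultimately show ?thesis unfolding ee by simp
  qed
  then show "x = y" unfolding xr yr by (simp add: fun_eq_iff)
qed

lemma RM_eq:
  assumes k: "k \<ge> 2"
  shows "RM n m k = Phi m ` ((grid n m \<times> Qk n k) - Top n m k)"
proof
  show "RM n m k \<subseteq> Phi m ` ((grid n m \<times> Qk n k) - Top n m k)"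
  proof
    fix \<alpha> assume a: "\<alpha> \<in> RM n m k"
    define r where "r = (\<lambda>i. \<alpha> i mod (m + 1))"
    define q where "q = (\<lambda>i. \<alpha> i div (m + 1))"
    have ae: "\<alpha> \<in> expvecs n" using a by (simp add: RM_def)
    have aPhi: "\<alpha> = Phi m (r, q)"
    proof
      fix i show "\<alpha> i = Phi m (r, q) i"
        using mult_div_mod_eq[of "m + 1" "\<alpha> i"] by (simp add: Phi_def r_def q_def)
    qed
    have rg: "r \<in> grid n m" using ae by (auto simp: r_def grid_def expvecs_def less_Suc_eq_le)
    have qe: "q \<in> expvecs n" using ae by (auto simp: q_def expvecs_def)
    have qs: "(\<Sum>i<n. q i) < k"
    proof (rule ccontr)
      assume "\<not> ?thesis"
      then have "hasI n m k \<alpha>" by (intro hasI_div) (simp add: q_def)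
      then show False using a by (simp add: RM_def)
    qed
    have nt: "(r, q) \<notin> Top n m k"
    proof
      assume "(r, q) \<in> Top n m k"
      then have rm: "r = mv n m" and qt: "(\<Sum>i<n. q i) = k - 1" by (auto simp: Top_def Qt_def)
      have "(\<Sum>i<n. \<alpha> i) = (\<Sum>i<n. (m + 1) * q i + m)"
        by (rule sum.cong) (auto simp: aPhi Phi_def rm mv_def)
      also have "\<dots> = (\<Sum>i<n. (m + 1) * q i) + (\<Sum>i<n. m)" by (rule sum.distrib)
      also have "(\<Sum>i<n. (m + 1) * q i) = (m + 1) * (\<Sum>i<n. q i)" by (rule sum_distrib_left[symmetric])
      also have "(\<Sum>i<n. m) = m * n" by simp
      also have "(\<Sum>i<n. q i) = k - 1" by (rule qt)
      finally have "(\<Sum>i<n. \<alpha> i) > Dg n m k" using k unfolding Dg_def by simp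
      then show False using a by (simp add: RM_def)
    qed
    show "\<alpha> \<in> Phi m ` ((grid n m \<times> Qk n k) - Top n m k)"
      using aPhi rg qe qs nt by (auto simp: Qk_def)
  qed
next
  show "Phi m ` ((grid n m \<times> Qk n k) - Top n m k) \<subseteq> RM n m k"
  proof
    fix \<alpha> assume "\<alpha> \<in> Phi m ` ((grid n m \<times> Qk n k) - Top n m k)"
    then obtain r q where rq: "r \<in> grid n m" "q \<in> Qk n k" "(r, q) \<notin> Top n m k" and aPhi: "\<alpha> = Phi m (r, q)"
      by auto
    have ae: "\<alpha> \<in> expvecs n" using rq(1,2) by (auto simp: aPhi Phi_def grid_def Qk_def expvecs_def)
    have le: "\<forall>i<n. \<alpha> i \<le> (m + 1) * q i + r i" by (simp add: aPhi Phi_def)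
    have le2: "\<forall>i<n. \<alpha> i \<le> (m + 1) * q i + m" using rq(1) by (auto simp: aPhi Phi_def grid_def)
    have qs: "(\<Sum>i<n. q i) < k" using rq(2) by (simp add: Qk_def)
    have nt: "\<not> (r = mv n m \<and> (\<Sum>i<n. q i) = k - 1)"
      using rq(2,3) by (auto simp: Top_def Qt_def Qk_def)
    show "\<alpha> \<in> RM n m k"
      using ae deg_bound[OF k rq(1) qs nt le] not_hasI[OF le2 qs] by (simp add: RM_def)
  qed
qed

lemma count_RM:
  assumes k: "k \<ge> 2"
  shows "card (RM n m k) = card (Cond n m k) + card (Qp n k)"
proof -
  have fin: "finite (grid n m \<times> Qk n k)" using finite_grid finite_Qk by blast
  have TopS: "Top n m k \<subseteq> grid n m \<times> Qk n k"
    using mv_grid k by (auto simp: Top_def Qt_def Qk_def)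
  have "card (RM n m k) = card ((grid n m \<times> Qk n k) - Top n m k)"
    unfolding RM_eq[OF k] by (rule card_image) (rule inj_on_subset[OF inj_Phi], auto)
  also have "\<dots> = card (grid n m \<times> Qk n k) - card (Top n m k)"
    using card_Diff_subset[OF finite_subset[OF TopS fin] TopS] .
  also have "card (Top n m k) = card (Qt n k)"
    unfolding Top_def by (rule card_image) (auto simp: inj_on_def)
  also have "card (grid n m \<times> Qk n k) = card (grid n m) * card (Qk n k)"
    by (simp add: card_cartesian_product)
  finally have c1: "card (RM n m k) = card (grid n m) * card (Qk n k) - card (Qt n k)" .
  have "Qk n k = Qp n k \<union> Qt n k" using k by (auto simp: Qk_def Qp_def Qt_def)
  moreover have "Qp n k \<inter> Qt n k = {}" using k by (auto simp: Qp_def Qt_def)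
  moreover have "Qp n k \<subseteq> Qk n k" "Qt n k \<subseteq> Qk n k" using k by (auto simp: Qk_def Qp_def Qt_def)
  then have "finite (Qp n k)" "finite (Qt n k)" using finite_Qk finite_subset by blast+
  ultimately have c2: "card (Qk n k) = card (Qp n k) + card (Qt n k)" by (simp add: card_Un_disjoint)
  have z: "(\<lambda>_. 0) \<in> grid n m" by (simp add: grid_def)
  have c3: "card (Cond n m k) = (card (grid n m) - 1) * card (Qk n k)"
    unfolding Cond_def using z finite_grid by (simp add: card_cartesian_product)
  have "card (grid n m) > 0" using z finite_grid card_gt_0_iff by blast
  then obtain g where g: "card (grid n m) = Suc g" by (cases "card (grid n m)") auto
  show ?thesis unfolding c1 c3 c2 g by (simp add: algebra_simps)
qed



definition dd :: "nat \<Rightarrow> nat \<Rightarrow> nat \<Rightarrow> (nat \<Rightarrow> nat) \<Rightarrow> nat" where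
  "dd n m k l = (m + 1) * (k - 1) - 1 - (m + 1) * (\<Sum>i<n. l i)"

definition Ev :: "nat \<Rightarrow> nat \<Rightarrow> nat \<Rightarrow> (nat \<Rightarrow> nat) \<Rightarrow> nat \<Rightarrow> nat \<Rightarrow> nat" where
  "Ev n m k l j = (\<lambda>i. if i < n then m + (m + 1) * l i + (if i = j then dd n m k l else 0) else 0)"

definition G :: "nat \<Rightarrow> nat \<Rightarrow> nat \<Rightarrow> (nat \<Rightarrow> nat) \<Rightarrow> rpoly" where
  "G n m k l = W_gen n m (dd n m k l) l"

lemma G_alt: "G n m k l = (\<lambda>\<alpha>. \<Sum>j<n. (if \<alpha> = Ev n m k l j then 1 else 0))"
  unfolding G_def W_gen_def Ev_def by simp

lemma gens_eq:
  assumes k: "k \<ge> 2" and m: "m \<ge> 1"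
  shows "{W_gen n m d l | d l. l \<in> expvecs n \<and> d + (m + 1) * (\<Sum>i<n. l i) = (m + 1) * (k - 1) - 1}
         = G n m k ` Qp n k"
proof -
  have A: "(l \<in> expvecs n \<and> d + (m + 1) * (\<Sum>i<n. l i) = (m + 1) * (k - 1) - 1) \<longleftrightarrow>
           (l \<in> Qp n k \<and> d = dd n m k l)" for l d
  proof
    assume h: "l \<in> expvecs n \<and> d + (m + 1) * (\<Sum>i<n. l i) = (m + 1) * (k - 1) - 1"
    moreover have "(m + 1) * (k - 1) \<ge> 1" using k by simp
    ultimately have "(m + 1) * (\<Sum>i<n. l i) < (m + 1) * (k - 1)" by linarith
    then have "(\<Sum>i<n. l i) < k - 1" by (subst (asm) mult_less_cancel1) simp
    then show "l \<in> Qp n k \<and> d = dd n m k l" using h by (auto simp: Qp_def dd_def)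
  next
    assume h: "l \<in> Qp n k \<and> d = dd n m k l"
    then have "(\<Sum>i<n. l i) \<le> k - 2" by (simp add: Qp_def)
    then have "(m + 1) * (\<Sum>i<n. l i) \<le> (m + 1) * (k - 2)" by (intro mult_le_mono2)
    moreover have "(m + 1) * (k - 1) = (m + 1) * (k - 2) + m + 1"
    proof -
      have "k - 1 = Suc (k - 2)" using k by linarith
      then show ?thesis by simp
    qed
    ultimately show "l \<in> expvecs n \<and> d + (m + 1) * (\<Sum>i<n. l i) = (m + 1) * (k - 1) - 1"
      using h by (auto simp: Qp_def dd_def)
  qed
  show ?thesis
  proof
    show "{W_gen n m d l | d l. l \<in> expvecs n \<and> d + (m + 1) * (\<Sum>i<n. l i) = (m + 1) * (k - 1) - 1}
         \<subseteq> G n m k ` Qp n k"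
    proof
      fix x assume "x \<in> {W_gen n m d l | d l. l \<in> expvecs n \<and> d + (m + 1) * (\<Sum>i<n. l i) = (m + 1) * (k - 1) - 1}"
      then obtain d l where "x = W_gen n m d l" "l \<in> expvecs n \<and> d + (m + 1) * (\<Sum>i<n. l i) = (m + 1) * (k - 1) - 1"
        by blast
      then have "x = G n m k l" "l \<in> Qp n k" using A[of l d] unfolding G_def by auto
      then show "x \<in> G n m k ` Qp n k" by blast
    qed
  next
    show "G n m k ` Qp n k \<subseteq> {W_gen n m d l | d l. l \<in> expvecs n \<and> d + (m + 1) * (\<Sum>i<n. l i) = (m + 1) * (k - 1) - 1}"
    proof
      fix x assume "x \<in> G n m k ` Qp n k"
      then obtain l where l: "x = G n m k l" "l \<in> Qp n k" by blast
      then have "l \<in> expvecs n \<and> dd n m k l + (m + 1) * (\<Sum>i<n. l i) = (m + 1) * (k - 1) - 1"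
        using A[of l "dd n m k l"] by auto
      then show "x \<in> {W_gen n m d l | d l. l \<in> expvecs n \<and> d + (m + 1) * (\<Sum>i<n. l i) = (m + 1) * (k - 1) - 1}"
        using l unfolding G_def by blast
    qed
  qed
qed

lemma le_sum_eq:
  fixes f g :: "nat \<Rightarrow> nat"
  assumes "\<forall>i<n. f i \<le> g i" "(\<Sum>i<n. g i) \<le> (\<Sum>i<n. f i)"
  shows "\<forall>i<n. f i = g i"
proof -
  have s: "(\<Sum>i<n. f i) \<le> (\<Sum>i<n. g i)" using assms(1) by (intro sum_mono) auto
  have eq: "(\<Sum>i<n. f i) = (\<Sum>i<n. g i)" using antisym[OF s assms(2)] .
  show ?thesis
  proof (intro allI impI)
    fix i assume "i < n"
    show "f i = g i"
      by (rule sum_mono_inv[OF eq]) (use assms(1) \<open>i < n\<close> in auto)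
  qed
qed

lemma Ev_key:
  assumes k: "k \<ge> 2" and m: "m \<ge> 1" and l: "l \<in> Qp n k" and l': "l' \<in> Qp n k"
    and j: "j < n" "l j = 0" and j': "j' < n" and e: "Ev n m k l j = Ev n m k l' j'"
  shows "\<forall>i<n. l i \<le> l' i"
proof -
  have jj: "j = j'"
  proof (rule ccontr)
    assume ne: "j \<noteq> j'"
    have "Ev n m k l j j' = Ev n m k l' j' j'" using e by simp
    then have eq: "(m + 1) * l j' = (m + 1) * l' j' + dd n m k l'" using ne j' by (simp add: Ev_def)
    have s: "(\<Sum>i<n. l' i) \<le> k - 2" using l' by (simp add: Qp_def)
    define X where "X = k - 1 - (\<Sum>i<n. l' i)"
    have X1: "X \<ge> 1" using s k unfolding X_def by linarith
    have kx: "k - 1 = (\<Sum>i<n. l' i) + X" using s k unfolding X_def by linarith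
    have "(m + 1) * (k - 1) = (m + 1) * ((\<Sum>i<n. l' i) + X)" by (subst kx) (rule refl)
    also have "\<dots> = (m + 1) * (\<Sum>i<n. l' i) + (m + 1) * X" by (rule distrib_left)
    finally have "(m + 1) * (k - 1) = (m + 1) * (\<Sum>i<n. l' i) + (m + 1) * X" .
    then have "dd n m k l' = (m + 1) * X - 1" unfolding dd_def by simp
    moreover have "(m + 1) * X \<ge> 1" using X1 by simp
    ultimately have "(m + 1) * l j' + 1 = (m + 1) * l' j' + (m + 1) * X" using eq by linarith
    then have "(m + 1) * l j' + 1 = (m + 1) * (l' j' + X)" by (simp add: distrib_left)
    then have eqm: "((m + 1) * l j' + 1) mod (m + 1) = ((m + 1) * (l' j' + X)) mod (m + 1)" by (rule arg_cong)
    have B: "((m + 1) * (l' j' + X)) mod (m + 1) = 0" by (rule mod_mult_self1_is_0)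
    have A: "((m + 1) * l j' + 1) mod (m + 1) = 1"
      using dm[of 1 "m + 1" "l j'"] m by simp
    have "(1::nat) = ((m + 1) * l j' + 1) mod (m + 1)" using A by (rule sym)
    also have "\<dots> = ((m + 1) * (l' j' + X)) mod (m + 1)" by (rule eqm)
    also have "\<dots> = 0" by (rule B)
    finally show False by simp
  qed
  show ?thesis
  proof (intro allI impI)
    fix i assume i: "i < n"
    show "l i \<le> l' i"
    proof (cases "i = j")
      case True then show ?thesis using j by simp
    next
      case False
      have "Ev n m k l j i = Ev n m k l' j' i" using e by simp
      then have h: "l i + m * l i = l' i + m * l' i" using False jj i by (simp add: Ev_def)
      show ?thesis
      proof (rule ccontr)
        assume "\<not> l i \<le> l' i"
        then have lt: "l' i < l i" by simp
        then have "m * l' i \<le> m * l i" by simp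
        then show False using h lt by linarith
      qed
    qed
  qed
qed



lemma sum_ind_less:
  assumes "a \<le> Suc m"
  shows "(\<Sum>s\<le>m. (if s < a then 1 else 0::nat)) = a"
proof -
  have "{..m} = {..<a} \<union> {a..m}" using assms by auto
  moreover have "{..<a} \<inter> {a..m} = {}" by auto
  ultimately have "(\<Sum>s\<le>m. (if s < a then 1 else 0::nat)) =
     (\<Sum>s<a. (if s < a then 1 else 0::nat)) + (\<Sum>s\<in>{a..m}. (if s < a then 1 else 0::nat))"
    by (simp add: sum.union_disjoint)
  also have "\<dots> = a" by simp
  finally show ?thesis .
qed

lemma sum_ind_ge1:
  "(\<Sum>s\<le>m. (if 1 \<le> s then 1 else 0::nat)) = m"
proof -
  have "(\<Sum>s\<le>m. (if 1 \<le> s then 1 else 0::nat)) = (\<Sum>s\<le>m. 1 - (if s < 1 then 1 else 0::nat))"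
    by (rule sum.cong) auto
  also have "\<dots> = (\<Sum>s\<le>m. (1::nat)) - (\<Sum>s\<le>m. (if s < 1 then 1 else 0::nat))"
    by (rule sum_subtractf_nat) auto
  also have "(\<Sum>s\<le>m. (if s < 1 then 1 else 0::nat)) = 1" using sum_ind_less[of 1 m] by simp
  finally show ?thesis by simp
qed

lemma lp_degree_shift:
  assumes "\<And>s. e s = b + f s" "(\<Sum>s\<le>m. f s) = a"
  shows "degree (lp m e) = (m + 1) * b + a"
  unfolding lp_degree assms(1) sum.distrib assms(2) by simp

lemma prod_nonzero_real: "(\<forall>i<(n::nat). f i \<noteq> (0::real)) \<Longrightarrow> (\<Prod>i<n. f i) \<noteq> 0"
  by (subst prod_zero_iff) auto

lemma ell_prodp_zero:
  assumes "b \<in> expvecs n" "i < n" "a i \<le> m" "b i < e i (a i)"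
  shows "ell n (a, b) (prodp n (\<lambda>i. lp m (e i))) = 0"
proof -
  have "poly ((pderiv ^^ b i) (lp m (e i))) (real (a i)) = 0"
    using lp_deriv_zero[where e="e i", OF assms(3,4)] .
  then show ?thesis unfolding ell_prodp[OF assms(1)] using assms(2)
    by (subst prod_zero_iff) auto
qed

lemma ell_prodp_nonzero:
  assumes "b \<in> expvecs n" "\<forall>i<n. a i \<le> m \<and> b i = e i (a i)"
  shows "ell n (a, b) (prodp n (\<lambda>i. lp m (e i))) \<noteq> 0"
  unfolding ell_prodp[OF assms(1)]
proof (intro prod_nonzero_real allI impI)
  fix i assume "i < n"
  then have "a i \<le> m" "b i = e i (a i)" using assms(2) by auto
  then show "poly ((pderiv ^^ b i) (lp m (e i))) (real (a i)) \<noteq> 0" by (simp add: lp_deriv_nonzero)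
qed

definition rho :: "nat \<Rightarrow> nat \<Rightarrow> (nat \<Rightarrow> nat) \<times> (nat \<Rightarrow> nat) \<Rightarrow> nat" where
  "rho n m c = (\<Sum>i<n. snd c i) * (m * n + 1) + (\<Sum>i<n. fst c i)"

definition Vs :: "nat \<Rightarrow> nat \<Rightarrow> nat \<Rightarrow> rpoly set" where
  "Vs n m k = {P. is_poly n P \<and> supp P \<subseteq> RM n m k}"

lemma grid_ext:
  assumes "a \<in> grid n m" "a' \<in> grid n m" "\<forall>i<n. a i = a' i" shows "a = a'"
proof
  fix i show "a i = a' i" using assms by (cases "i < n") (auto simp: grid_def)
qed

lemma expvecs_ext:
  assumes "a \<in> expvecs n" "a' \<in> expvecs n" "\<forall>i<n. a i = a' i" shows "a = a'"
proof
  fix i show "a i = a' i" using assms by (cases "i < n") (auto simp: expvecs_def)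
qed



lemma G_nz: "G n m k l' \<alpha> \<noteq> 0 \<Longrightarrow> \<exists>j'<n. \<alpha> = Ev n m k l' j'"
proof (rule ccontr)
  assume a: "G n m k l' \<alpha> \<noteq> 0" and "\<not> (\<exists>j'<n. \<alpha> = Ev n m k l' j')"
  then have "G n m k l' \<alpha> = 0" unfolding G_alt by (intro sum.neutral) auto
  then show False using a by simp
qed

lemma G_self: "j < n \<Longrightarrow> G n m k l (Ev n m k l j) \<noteq> 0"
proof -
  assume j: "j < n"
  have "(1::real) \<le> (\<Sum>j'<n. (if Ev n m k l j = Ev n m k l j' then 1 else 0))"
  proof -
    have "(\<lambda>j'. if Ev n m k l j = Ev n m k l j' then 1 else (0::real)) j \<le> (\<Sum>j'<n. (if Ev n m k l j = Ev n m k l j' then 1 else 0))"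
      by (rule member_le_sum) (use j in auto)
    then show ?thesis by simp
  qed
  then show ?thesis unfolding G_alt by auto
qed

lemma zero_coord:
  assumes "l \<in> Qp n k" "k \<ge> 2" "n \<ge> k - 1"
  shows "\<exists>j<n. l j = 0"
proof (rule ccontr)
  assume "\<not> ?thesis"
  then have "\<forall>j<n. 1 \<le> l j" by auto
  then have "(\<Sum>j<n. (1::nat)) \<le> (\<Sum>j<n. l j)" by (intro sum_mono) auto
  moreover have "(\<Sum>j<n. l j) \<le> k - 2" using assms(1) by (simp add: Qp_def)
  ultimately show False using assms(2,3) by simp
qed

lemma G_contain:
  assumes "k \<ge> 2" "m \<ge> 1" "l \<in> Qp n k" "l' \<in> Qp n k" "j < n" "l j = 0"
    "G n m k l' (Ev n m k l j) \<noteq> 0"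
  shows "\<forall>i<n. l i \<le> l' i"
proof -
  obtain j' where "j' < n" "Ev n m k l j = Ev n m k l' j'" using G_nz[OF assms(7)] by blast
  then show ?thesis using Ev_key[OF assms(1-6)] by blast
qed

lemma expvecs_ext':
  assumes "a \<in> expvecs n" "a' \<in> expvecs n" "\<forall>i<n. a i = a' i" shows "a = a'"
proof
  fix i show "a i = a' i" using assms by (cases "i < n") (auto simp: expvecs_def)
qed

lemma inj_G:
  assumes "k \<ge> 2" "m \<ge> 1" "n \<ge> k - 1"
  shows "inj_on (G n m k) (Qp n k)"
proof (rule inj_onI)
  fix l l' assume l: "l \<in> Qp n k" and l': "l' \<in> Qp n k" and e: "G n m k l = G n m k l'"
  obtain j where j: "j < n" "l j = 0" using zero_coord[OF l assms(1,3)] by blast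
  obtain j' where j': "j' < n" "l' j' = 0" using zero_coord[OF l' assms(1,3)] by blast
  have "G n m k l' (Ev n m k l j) \<noteq> 0" using G_self[OF j(1), of m k l] e by simp
  then have A: "\<forall>i<n. l i \<le> l' i" using G_contain[OF assms(1,2) l l' j] by blast
  have "G n m k l (Ev n m k l' j') \<noteq> 0" using G_self[OF j'(1), of m k l'] e by simp
  then have B: "\<forall>i<n. l' i \<le> l i" using G_contain[OF assms(1,2) l' l j'] by blast
  show "l = l'" using A B l l' by (intro expvecs_ext') (auto simp: Qp_def intro: antisym)
qed

lemma finite_Qp: "k \<ge> 2 \<Longrightarrow> finite (Qp n k)"
proof -
  assume k: "k \<ge> 2"
  have "Qp n k \<subseteq> Qk n k" using k by (auto simp: Qk_def Qp_def)
  then show ?thesis using finite_Qk finite_subset by blast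
qed

lemma indep_G:
  assumes k: "k \<ge> 2" and m: "m \<ge> 1" and n: "n \<ge> k - 1"
  shows "pv.independent (G n m k ` Qp n k)"
proof
  let ?S = "G n m k ` Qp n k"
  have fin: "finite (Qp n k)" using finite_Qp[OF k] .
  assume "pv.dependent ?S"
  then obtain u v0 where v0: "v0 \<in> ?S" "u v0 \<noteq> 0" and s0: "(\<Sum>v\<in>?S. pscale (u v) v) = 0"
    unfolding pv.dependent_finite[OF finite_imageI[OF fin]] by blast
  define c where "c l = u (G n m k l)" for l
  have s1: "(\<Sum>l\<in>Qp n k. pscale (c l) (G n m k l)) = 0"
    using s0 unfolding c_def by (subst (asm) sum.reindex[OF inj_G[OF k m n]]) simp
  define Z where "Z = {l\<in>Qp n k. c l \<noteq> 0}"
  have Zne: "Z \<noteq> {}" using v0 unfolding Z_def c_def by auto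
  have Zfin: "finite Z" using fin unfolding Z_def by simp
  define f where "f l = (\<Sum>i<n. l i)" for l :: "nat \<Rightarrow> nat"
  have "Max (f ` Z) \<in> f ` Z" using Zne Zfin by (intro Max_in) auto
  then obtain l0 where l0: "l0 \<in> Z" "f l0 = Max (f ` Z)" by auto
  have l0max: "\<forall>l\<in>Z. f l \<le> f l0" using l0 Zfin by auto
  have l0Q: "l0 \<in> Qp n k" and cl0: "c l0 \<noteq> 0" using l0 by (auto simp: Z_def)
  obtain j where j: "j < n" "l0 j = 0" using zero_coord[OF l0Q k n] by blast
  define a0 where "a0 = Ev n m k l0 j"
  have "(\<Sum>l\<in>Qp n k. c l * G n m k l a0) = 0"
    using fun_cong[OF s1, of a0] by (simp add: sum_fun_apply)
  moreover have "(\<Sum>l\<in>Qp n k. c l * G n m k l a0) = c l0 * G n m k l0 a0"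
  proof -
    have "(\<Sum>l\<in>Qp n k. c l * G n m k l a0) = c l0 * G n m k l0 a0 + (\<Sum>l\<in>Qp n k - {l0}. c l * G n m k l a0)"
      by (rule sum.remove[OF fin l0Q])
    moreover have "(\<Sum>l\<in>Qp n k - {l0}. c l * G n m k l a0) = 0"
    proof (rule sum.neutral, rule ballI)
      fix l assume l: "l \<in> Qp n k - {l0}"
      show "c l * G n m k l a0 = 0"
      proof (rule ccontr)
        assume "c l * G n m k l a0 \<noteq> 0"
        then have cl: "c l \<noteq> 0" and g: "G n m k l a0 \<noteq> 0" by auto
        have le: "\<forall>i<n. l0 i \<le> l i" using G_contain[OF k m l0Q _ j g[unfolded a0_def]] l by blast
        have "f l \<le> f l0" using l0max cl l unfolding Z_def by auto
        then have "\<forall>i<n. l0 i = l i" using le_sum_eq[OF le] unfolding f_def by blast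
        then have "l0 = l" using l0Q l by (intro expvecs_ext') (auto simp: Qp_def)
        then show False using l by simp
      qed
    qed
    ultimately show ?thesis by simp
  qed
  moreover have "c l0 * G n m k l0 a0 \<noteq> 0" using cl0 G_self[OF j(1)] unfolding a0_def by simp
  ultimately show False by simp
qed

lemma dim_W:
  assumes k: "k \<ge> 2" and m: "m \<ge> 1" and n: "n \<ge> k - 1"
  shows "pv.dim (W_space n m k) = card (Qp n k)"
proof -
  have "W_space n m k = pv.span (G n m k ` Qp n k)"
    unfolding W_space_def gens_eq[OF k m] by simp
  then have "pv.dim (W_space n m k) = card (G n m k ` Qp n k)"
    using pv.dim_span_eq_card_independent[OF indep_G[OF k m n]] by simp
  also have "\<dots> = card (Qp n k)" by (rule card_image[OF inj_G[OF k m n]])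
  finally show ?thesis .
qed



definition mon :: "(nat \<Rightarrow> nat) \<Rightarrow> rpoly" where
  "mon \<alpha> = (\<lambda>\<beta>. if \<beta> = \<alpha> then 1 else 0)"

lemma finite_RM: "k \<ge> 2 \<Longrightarrow> finite (RM n m k)"
  using RM_eq[of k n m] finite_grid finite_Qk by simp

lemma RM_expvecs: "RM n m k \<subseteq> expvecs n"
  by (auto simp: RM_def)

lemma is_poly_supp: "is_poly n P \<longleftrightarrow> finite (supp P) \<and> supp P \<subseteq> expvecs n"
  by (simp add: is_poly_def supp_def)

lemma Vs_subspace: "pv.subspace (Vs n m k)"
  unfolding pv.subspace_def
proof (intro conjI ballI allI)
  show "0 \<in> Vs n m k" by (simp add: Vs_def is_poly_supp supp_def)
next
  fix x y assume "x \<in> Vs n m k" "y \<in> Vs n m k"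
  then show "x + y \<in> Vs n m k"
    using supp_add[of x y] unfolding Vs_def is_poly_supp by (auto intro: finite_subset)
next
  fix c x assume "x \<in> Vs n m k"
  then show "pscale c x \<in> Vs n m k"
    using supp_scale[of c x] unfolding Vs_def is_poly_supp by (auto intro: finite_subset)
qed

lemma supp_mon: "supp (mon \<alpha>) = {\<alpha>}"
  by (auto simp: supp_def mon_def)

lemma mon_Vs: "\<alpha> \<in> RM n m k \<Longrightarrow> mon \<alpha> \<in> Vs n m k"
  using RM_expvecs by (auto simp: Vs_def is_poly_supp supp_mon)

lemma Vs_span:
  assumes k: "k \<ge> 2"
  shows "Vs n m k \<subseteq> pv.span (mon ` RM n m k)"
proof
  fix P assume P: "P \<in> Vs n m k"
  have "P = (\<Sum>\<alpha>\<in>RM n m k. pscale (P \<alpha>) (mon \<alpha>))"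
  proof
    fix \<beta>
    have "(\<Sum>\<alpha>\<in>RM n m k. pscale (P \<alpha>) (mon \<alpha>)) \<beta> = (\<Sum>\<alpha>\<in>RM n m k. (if \<beta> = \<alpha> then P \<alpha> else 0))"
      unfolding sum_fun_apply pscale_apply by (intro sum.cong) (auto simp: mon_def)
    also have "\<dots> = (if \<beta> \<in> RM n m k then P \<beta> else 0)"
      using finite_RM[OF k] by simp
    also have "\<dots> = P \<beta>" using P by (auto simp: Vs_def supp_def)
    finally show "P \<beta> = (\<Sum>\<alpha>\<in>RM n m k. pscale (P \<alpha>) (mon \<alpha>)) \<beta>" by simp
  qed
  also have "\<dots> \<in> pv.span (mon ` RM n m k)"
    by (intro pv.span_sum pv.span_scale pv.span_base) auto
  finally show "P \<in> pv.span (mon ` RM n m k)" .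
qed

lemma inj_mon: "inj mon"
  by (rule injI) (metis mon_def zero_neq_one)

lemma indep_mon:
  assumes k: "k \<ge> 2"
  shows "pv.independent (mon ` RM n m k)"
proof
  assume "pv.dependent (mon ` RM n m k)"
  then obtain u v0 where v0: "v0 \<in> mon ` RM n m k" "u v0 \<noteq> 0" and s0: "(\<Sum>v\<in>mon ` RM n m k. pscale (u v) v) = 0"
    unfolding pv.dependent_finite[OF finite_imageI[OF finite_RM[OF k]]] by blast
  have s1: "(\<Sum>\<alpha>\<in>RM n m k. pscale (u (mon \<alpha>)) (mon \<alpha>)) = 0"
    using s0 by (subst (asm) sum.reindex[OF inj_on_subset[OF inj_mon]]) auto
  obtain \<alpha>0 where a0: "\<alpha>0 \<in> RM n m k" "v0 = mon \<alpha>0" using v0 by blast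
  have "(\<Sum>\<alpha>\<in>RM n m k. pscale (u (mon \<alpha>)) (mon \<alpha>)) \<alpha>0 = (\<Sum>\<alpha>\<in>RM n m k. (if \<alpha>0 = \<alpha> then u (mon \<alpha>) else 0))"
    unfolding sum_fun_apply pscale_apply by (intro sum.cong) (auto simp: mon_def)
  also have "\<dots> = u (mon \<alpha>0)" using finite_RM[OF k] a0(1) by simp
  finally show False using s1 v0(2) a0(2) by simp
qed

lemma dim_Vs:
  assumes k: "k \<ge> 2"
  shows "pv.dim (Vs n m k) = card (RM n m k)"
proof (rule pv.dim_unique)
  show "mon ` RM n m k \<subseteq> Vs n m k" using mon_Vs by blast
  show "Vs n m k \<subseteq> pv.span (mon ` RM n m k)" by (rule Vs_span[OF k])
  show "pv.independent (mon ` RM n m k)" by (rule indep_mon[OF k])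
  show "card (mon ` RM n m k) = card (RM n m k)" by (rule card_image[OF inj_on_subset[OF inj_mon]]) auto
qed

lemma U_eq: "U_space n m k = {P\<in>Vs n m k. \<forall>c\<in>Cond n m k. ell n c P = 0}"
proof (rule set_eqI)
  fix P
  show "P \<in> U_space n m k \<longleftrightarrow> P \<in> {P\<in>Vs n m k. \<forall>c\<in>Cond n m k. ell n c P = 0}"
  proof (cases "is_poly n P")
    case True
    have "(\<forall>a\<in>grid n m - {(\<lambda>_. 0)}. zero_mult_ge n P k (\<lambda>i. real (a i))) \<longleftrightarrow> (\<forall>c\<in>Cond n m k. ell n c P = 0)"
      unfolding zero_mult_ge_def Cond_def Qk_def ell_def by auto
    then show ?thesis using True reduced_iff[OF True, of m k] by (simp add: U_space_def Vs_def)
  next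
    case False
    then show ?thesis by (simp add: U_space_def Vs_def)
  qed
qed



lemma Vs_fin: "P \<in> Vs n m k \<Longrightarrow> finite (supp P)"
  by (simp add: Vs_def is_poly_supp)

lemma grid_le: "a \<in> grid n m \<Longrightarrow> i < n \<Longrightarrow> a i \<le> m"
  by (simp add: grid_def)

lemma grid_expvecs: "a \<in> grid n m \<Longrightarrow> a \<in> expvecs n"
  by (simp add: grid_def expvecs_def)

lemma box_le: "\<alpha> \<in> box n d \<Longrightarrow> i < n \<Longrightarrow> \<alpha> i \<le> d i"
  by (simp add: box_def)

lemma box_expvecs: "\<alpha> \<in> box n d \<Longrightarrow> \<alpha> \<in> expvecs n"
  by (simp add: box_def expvecs_def)

lemma sum_grid_le: "a \<in> grid n m \<Longrightarrow> (\<Sum>i<n. a i) \<le> m * n"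
  using sum_r_le by blast

lemma witness_nontop:
  assumes k: "k \<ge> 2" and m: "m \<ge> 1"
    and a: "a \<in> grid n m" "a \<noteq> (\<lambda>_. 0)" and b: "b \<in> expvecs n" "(\<Sum>i<n. b i) < k"
    and nt: "\<not> (a = mv n m \<and> (\<Sum>i<n. b i) = k - 1)"
  shows "\<exists>w\<in>Vs n m k. ell n (a, b) w \<noteq> 0 \<and>
           (\<forall>c'\<in>Cond n m k. c' \<noteq> (a, b) \<and> rho n m c' \<le> rho n m (a, b) \<longrightarrow> ell n c' w = 0)"
proof -
  define e where "e i = (\<lambda>s. b i + (if s < a i then 1 else 0))" for i
  define w where "w = prodp n (\<lambda>i. lp m (e i))"
  have deg: "degree (lp m (e i)) = (m + 1) * b i + a i" if "i < n" for i
  proof (rule lp_degree_shift)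
    show "\<And>s. e i s = b i + (if s < a i then 1 else 0)" by (simp add: e_def)
    show "(\<Sum>s\<le>m. (if s < a i then 1 else 0)) = a i"
      using grid_le[OF a(1) that] by (intro sum_ind_less) simp
  qed
  have wV: "w \<in> Vs n m k"
  proof -
    have "supp w \<subseteq> RM n m k"
    proof
      fix \<alpha> assume "\<alpha> \<in> supp w"
      then have bx: "\<alpha> \<in> box n (\<lambda>i. degree (lp m (e i)))" using supp_prodp unfolding w_def by blast
      have le: "\<forall>i<n. \<alpha> i \<le> (m + 1) * b i + a i" using box_le[OF bx] deg by auto
      have le2: "\<forall>i<n. \<alpha> i \<le> (m + 1) * b i + m" using le grid_le[OF a(1)] by (meson add_le_mono order_refl order_trans)
      show "\<alpha> \<in> RM n m k"
        using box_expvecs[OF bx] deg_bound[OF k a(1) b(2) nt le] not_hasI[OF le2 b(2)]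
        by (simp add: RM_def)
    qed
    then show ?thesis using is_poly_prodp unfolding Vs_def w_def by blast
  qed
  have nz: "ell n (a, b) w \<noteq> 0"
    unfolding w_def using grid_le[OF a(1)] by (intro ell_prodp_nonzero[OF b(1)]) (simp add: e_def)
  have zero: "ell n c' w = 0" if c': "c' \<in> Cond n m k" "c' \<noteq> (a, b)" "rho n m c' \<le> rho n m (a, b)" for c'
  proof -
    obtain a' b' where cc: "c' = (a', b')" by (cases c')
    have a': "a' \<in> grid n m" "a' \<noteq> (\<lambda>_. 0)" and b': "b' \<in> expvecs n" "(\<Sum>i<n. b' i) < k"
      using c'(1) unfolding cc Cond_def Qk_def by auto
    have "\<exists>i<n. b' i < e i (a' i)"
    proof (rule ccontr)
      assume nn: "\<not> ?thesis"
      have H: "\<forall>i<n. b i + (if a' i < a i then 1 else 0) \<le> b' i"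
      proof (intro allI impI)
        fix i assume "i < n"
        then have "\<not> b' i < e i (a' i)" using nn by blast
        then show "b i + (if a' i < a i then 1 else 0) \<le> b' i" unfolding e_def by linarith
      qed
      then have le1: "\<forall>i<n. b i \<le> b' i" by auto
      let ?N = "m * n + 1"
      have r: "(\<Sum>i<n. b' i) * ?N + (\<Sum>i<n. a' i) \<le> (\<Sum>i<n. b i) * ?N + (\<Sum>i<n. a i)"
        using c'(3) unfolding cc rho_def by simp
      have sa: "(\<Sum>i<n. a i) \<le> m * n" by (rule sum_grid_le[OF a(1)])
      have "(\<Sum>i<n. b' i) \<le> (\<Sum>i<n. b i)"
      proof (rule ccontr)
        assume "\<not> ?thesis"
        then have "(\<Sum>i<n. b i) + 1 \<le> (\<Sum>i<n. b' i)" by simp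
        then have "((\<Sum>i<n. b i) + 1) * ?N \<le> (\<Sum>i<n. b' i) * ?N" by (rule mult_le_mono1)
        then show False using r sa by (simp add: algebra_simps)
      qed
      then have beq: "\<forall>i<n. b i = b' i" using le_sum_eq[OF le1] by blast
      have "\<forall>i<n. a i \<le> a' i"
      proof (intro allI impI)
        fix i assume i: "i < n"
        show "a i \<le> a' i"
        proof (rule ccontr)
          assume "\<not> a i \<le> a' i"
          then have "a' i < a i" by simp
          then have "b i + 1 \<le> b' i" using H i by auto
          then show False using beq i by auto
        qed
      qed
      moreover have "(\<Sum>i<n. a' i) \<le> (\<Sum>i<n. a i)"
      proof -
        have "(\<Sum>i<n. b' i) = (\<Sum>i<n. b i)" using beq by simp
        then show ?thesis using r by simp
      qed
      ultimately have "\<forall>i<n. a i = a' i" using le_sum_eq by blast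
      then have "a = a'" using grid_ext[OF a(1) a'(1)] by blast
      moreover have "b = b'" using expvecs_ext[OF b(1) b'(1)] beq by blast
      ultimately show False using c'(2) cc by simp
    qed
    then obtain i where i: "i < n" "b' i < e i (a' i)" by blast
    show ?thesis unfolding cc w_def by (rule ell_prodp_zero[where e=e and a=a', OF b'(1) i(1) grid_le[OF a'(1) i(1)] i(2)])
  qed
  show ?thesis using wV nz zero by blast
qed



lemma coeff_prodp_top:
  assumes "\<alpha> \<in> expvecs n" "\<forall>i<n. \<alpha> i = degree (ps i)" "\<forall>i<n. lead_coeff (ps i) = 1"
  shows "prodp n ps \<alpha> = 1"
  using assms by (simp add: prodp_def)

lemma witness_top:
  assumes k: "k \<ge> 2" and m: "m \<ge> 1" and n: "n \<ge> k - 1"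
    and b: "b \<in> expvecs n" "(\<Sum>i<n. b i) = k - 1"
  shows "\<exists>w\<in>Vs n m k. ell n (mv n m, b) w \<noteq> 0 \<and>
           (\<forall>c'\<in>Cond n m k. c' \<noteq> (mv n m, b) \<longrightarrow> ell n c' w = 0)"
proof -
  have n1: "0 < n" using n k by linarith
  define e1 where "e1 i = (\<lambda>s::nat. b i + (if s < m then 1 else 0))" for i
  define e2 where "e2 i = (\<lambda>s::nat. b i + (if 1 \<le> s then 1 else 0))" for i
  define P1 where "P1 = prodp n (\<lambda>i. lp m (e1 i))"
  define P2 where "P2 = prodp n (\<lambda>i. lp m (e2 i))"
  define w where "w = P1 - P2"
  have deg1: "degree (lp m (e1 i)) = (m + 1) * b i + m" for i
    by (rule lp_degree_shift[where f="\<lambda>s. if s < m then 1 else 0"]) (auto simp: e1_def intro: sum_ind_less)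
  have deg2: "degree (lp m (e2 i)) = (m + 1) * b i + m" for i
    by (rule lp_degree_shift[where f="\<lambda>s. if 1 \<le> s then 1 else 0"]) (use sum_ind_ge1[of m] in \<open>auto simp: e2_def\<close>)
  define top where "top = Phi m (mv n m, b)"
  have top_e: "top \<in> expvecs n" using b(1) by (auto simp: top_def Phi_def mv_def expvecs_def)
  have top_i: "top i = (m + 1) * b i + m" if "i < n" for i using that by (simp add: top_def Phi_def mv_def)
  have P1t: "P1 top = 1" unfolding P1_def
    by (rule coeff_prodp_top[OF top_e]) (simp add: top_i deg1, simp add: lp_lead)
  have P2t: "P2 top = 1" unfolding P2_def
    by (rule coeff_prodp_top[OF top_e]) (simp add: top_i deg2, simp add: lp_lead)
  have f1: "finite (supp P1)" "finite (supp P2)" unfolding P1_def P2_def by (rule finite_supp_prodp)+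
  have wsupp: "supp w \<subseteq> supp P1 \<union> supp P2" by (auto simp: w_def supp_def)
  have wV: "w \<in> Vs n m k"
  proof -
    have "supp w \<subseteq> RM n m k"
    proof
      fix \<alpha> assume a: "\<alpha> \<in> supp w"
      have ne: "\<alpha> \<noteq> top" using a P1t P2t by (auto simp: w_def supp_def)
      have bx: "\<alpha> \<in> box n (\<lambda>i. (m + 1) * b i + m)"
      proof -
        have "\<alpha> \<in> supp P1 \<or> \<alpha> \<in> supp P2" using a wsupp by blast
        then show ?thesis
        proof
          assume "\<alpha> \<in> supp P1"
          then have "\<alpha> \<in> box n (\<lambda>i. degree (lp m (e1 i)))" using supp_prodp unfolding P1_def by blast
          then show ?thesis unfolding deg1 .
        next
          assume "\<alpha> \<in> supp P2"
          then have "\<alpha> \<in> box n (\<lambda>i. degree (lp m (e2 i)))" using supp_prodp unfolding P2_def by blast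
          then show ?thesis unfolding deg2 .
        qed
      qed
      have le: "\<forall>i<n. \<alpha> i \<le> (m + 1) * b i + m" using box_le[OF bx] by blast
      have bk: "(\<Sum>i<n. b i) < k" using b(2) k by simp
      show "\<alpha> \<in> RM n m k"
        using box_expvecs[OF bx] deg_bound_top[OF k b box_expvecs[OF bx] le ne[unfolded top_def]]
          not_hasI[OF le bk] by (simp add: RM_def)
    qed
    moreover have "finite (supp w)" using f1 wsupp finite_subset by blast
    moreover have "supp w \<subseteq> expvecs n" using \<open>supp w \<subseteq> RM n m k\<close> RM_expvecs by blast
    ultimately show ?thesis unfolding Vs_def is_poly_supp by blast
  qed
  have mvg: "mv n m \<in> grid n m" by (rule mv_grid)
  have ell_w: "ell n c w = ell n c P1 - ell n c P2" for c
    unfolding w_def by (rule ell_diff[OF f1])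
  have nz1: "ell n (mv n m, b) P1 \<noteq> 0"
    unfolding P1_def by (intro ell_prodp_nonzero[OF b(1)]) (simp add: e1_def mv_def)
  have z2: "ell n (mv n m, b) P2 = 0"
    unfolding P2_def
    by (rule ell_prodp_zero[where e=e2 and a="mv n m", OF b(1) n1]) (use m n1 in \<open>auto simp: mv_def e2_def\<close>)
  have zero: "ell n c' w = 0" if c': "c' \<in> Cond n m k" "c' \<noteq> (mv n m, b)" for c'
  proof -
    obtain a' b' where cc: "c' = (a', b')" by (cases c')
    have a': "a' \<in> grid n m" "a' \<noteq> (\<lambda>_. 0)" and b': "b' \<in> expvecs n" "(\<Sum>i<n. b' i) < k"
      using c'(1) unfolding cc Cond_def Qk_def by auto
    have common: "\<forall>i<n. b i = b' i" if H: "\<forall>i<n. b i + f i \<le> b' i" for f :: "nat \<Rightarrow> nat"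
    proof -
      have le1: "\<forall>i<n. b i \<le> b' i" using H by auto
      have "(\<Sum>i<n. b' i) \<le> (\<Sum>i<n. b i)" using b(2) b'(2) by simp
      then show ?thesis using le_sum_eq[OF le1] by blast
    qed
    have "\<exists>i<n. b' i < e1 i (a' i)"
    proof (rule ccontr)
      assume nn: "\<not> ?thesis"
      have H: "\<forall>i<n. b i + (if a' i < m then 1 else 0) \<le> b' i"
      proof (intro allI impI)
        fix i assume "i < n"
        then have "\<not> b' i < e1 i (a' i)" using nn by blast
        then show "b i + (if a' i < m then 1 else 0) \<le> b' i" unfolding e1_def by linarith
      qed
      have beq: "\<forall>i<n. b i = b' i" using common[OF H] .
      have "\<forall>i<n. mv n m i = a' i"
      proof (intro allI impI)
        fix i assume i: "i < n"
        have "\<not> a' i < m"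
        proof
          assume "a' i < m"
          then have "b i + 1 \<le> b' i" using H i by auto
          then show False using beq i by auto
        qed
        then show "mv n m i = a' i" using grid_le[OF a'(1) i] i by (simp add: mv_def)
      qed
      then have "mv n m = a'" using grid_ext[OF mvg a'(1)] by blast
      moreover have "b = b'" using expvecs_ext[OF b(1) b'(1)] beq by blast
      ultimately show False using c'(2) cc by simp
    qed
    then obtain i where i: "i < n" "b' i < e1 i (a' i)" by blast
    have z1: "ell n c' P1 = 0" unfolding cc P1_def
      by (rule ell_prodp_zero[where e=e1 and a=a', OF b'(1) i(1) grid_le[OF a'(1) i(1)] i(2)])
    have "\<exists>i<n. b' i < e2 i (a' i)"
    proof (rule ccontr)
      assume nn: "\<not> ?thesis"
      have H: "\<forall>i<n. b i + (if 1 \<le> a' i then 1 else 0) \<le> b' i"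
      proof (intro allI impI)
        fix i assume "i < n"
        then have "\<not> b' i < e2 i (a' i)" using nn by blast
        then show "b i + (if 1 \<le> a' i then 1 else 0) \<le> b' i" unfolding e2_def by linarith
      qed
      have beq: "\<forall>i<n. b i = b' i" using common[OF H] .
      have "\<forall>i<n. (\<lambda>_. 0) i = a' i"
      proof (intro allI impI)
        fix i assume i: "i < n"
        have "\<not> 1 \<le> a' i"
        proof
          assume "1 \<le> a' i"
          then have "b i + 1 \<le> b' i" using H i by auto
          then show False using beq i by auto
        qed
        then show "(\<lambda>_. 0) i = a' i" by simp
      qed
      then have "(\<lambda>_. 0) = a'" using grid_ext[OF _ a'(1), of "\<lambda>_. 0"] by (simp add: grid_def)
      then show False using a'(2) by simp
    qed
    then obtain i2 where i2: "i2 < n" "b' i2 < e2 i2 (a' i2)" by blast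
    have z2': "ell n c' P2 = 0" unfolding cc P2_def
      by (rule ell_prodp_zero[where e=e2 and a=a', OF b'(1) i2(1) grid_le[OF a'(1) i2(1)] i2(2)])
    show ?thesis using ell_w[of c'] z1 z2' by simp
  qed
  have "ell n (mv n m, b) w \<noteq> 0" using ell_w[of "(mv n m, b)"] nz1 z2 by simp
  then show ?thesis using wV zero by blast
qed



lemma witness:
  assumes k: "k \<ge> 2" and m: "m \<ge> 1" and n: "n \<ge> k - 1" and c: "c \<in> Cond n m k"
  shows "\<exists>w\<in>Vs n m k. ell n c w \<noteq> 0 \<and>
           (\<forall>c'\<in>Cond n m k. c' \<noteq> c \<and> rho n m c' \<le> rho n m c \<longrightarrow> ell n c' w = 0)"
proof -
  obtain a b where cc: "c = (a, b)" by (cases c)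
  have a: "a \<in> grid n m" "a \<noteq> (\<lambda>_. 0)" and b: "b \<in> expvecs n" "(\<Sum>i<n. b i) < k"
    using c unfolding cc Cond_def Qk_def by auto
  show ?thesis
  proof (cases "a = mv n m \<and> (\<Sum>i<n. b i) = k - 1")
    case True
    then have "a = mv n m" "(\<Sum>i<n. b i) = k - 1" by auto
    then show ?thesis using witness_top[OF k m n b(1)] unfolding cc by blast
  next
    case False
    then show ?thesis using witness_nontop[OF k m a b False] unfolding cc by blast
  qed
qed

lemma finite_Cond: "finite (Cond n m k)"
  unfolding Cond_def using finite_grid finite_Qk by blast

theorem lemma4p4:
  fixes n m k :: nat
  assumes "m \<ge> 1" and "k \<ge> 2" and "n \<ge> k - 1"
  shows "vector_space.dim pscale (W_space n m k) = vector_space.dim pscale (U_space n m k)"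
proof -
  have "pv.dim {x\<in>Vs n m k. \<forall>c\<in>Cond n m k. ell n c x = 0} + card (Cond n m k) = pv.dim (Vs n m k)"
  proof (rule pv.dim_cut[OF Vs_subspace finite_imageI[OF finite_RM[OF assms(2)]] Vs_span[OF assms(2)] finite_Cond])
    show "\<And>c x y. c \<in> Cond n m k \<Longrightarrow> x \<in> Vs n m k \<Longrightarrow> y \<in> Vs n m k \<Longrightarrow> ell n c (x + y) = ell n c x + ell n c y"
      using ell_add Vs_fin by blast
    show "\<And>c r x. c \<in> Cond n m k \<Longrightarrow> x \<in> Vs n m k \<Longrightarrow> ell n c (pscale r x) = r * ell n c x"
      using ell_scale Vs_fin by blast
    show "\<And>c. c \<in> Cond n m k \<Longrightarrow> \<exists>w\<in>Vs n m k. ell n c w \<noteq> 0 \<and>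
           (\<forall>c'\<in>Cond n m k. c' \<noteq> c \<and> rho n m c' \<le> rho n m c \<longrightarrow> ell n c' w = 0)"
      using witness[OF assms(2,1,3)] by blast
  qed
  then have "pv.dim (U_space n m k) + card (Cond n m k) = card (RM n m k)"
    unfolding U_eq dim_Vs[OF assms(2)] .
  then have "pv.dim (U_space n m k) = card (Qp n k)"
    using count_RM[OF assms(2)] by simp
  then show ?thesis using dim_W[OF assms(2,1,3)] by simp
qed

end
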